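(* Let $X$ and $Y$ be Banach spaces, let $p\geq 1$ with conjugate exponent $p^*$ (so $\frac1p+\frac1{p^*}=1$, with $p^*=\infty$ when $p=1$), and let $u:X\to Y$ be a continuous linear operator. If the adjoint $u^*:Y^*\to X^*$ is almost $p^*$-summing, then for every $(x_i)_{i=1}^\infty\in Rad(X)$ we have $(u(x_i))_{i=1}^\infty\in \ell_p\langle Y\rangle$.
   Context: $r_i$ denote the Rademacher functions on $[0,1]$. For a Banach space $X$: $Rad(X)$ is the space of sequences $(x_i)\subset X$ with $\|(x_i)\|_{Rad(X)}:=\left(\int_0^1\left\|\sum_{i=1}^\infty r_i(t)x_i\right\|^2dt\right)^{1/2}<\infty$ (almost unconditionally summable sequences). For $1\le s\le\infty$, $\ell_s^w(X)$ is the space of sequences with $\|(x_i)\|_{w,s}:=\sup_{x^*\in B_{X^*}}\|(x^*(x_i))_i\|_{s}<\infty$. For $1\le p\le\infty$, $\ell_p\langle X\rangle$ is the space of sequences $(x_i)\subset X$ with $\sup\{\sum_i|x_i^*(x_i)| : (x_i^* )\in B_{\ell_{p^*}^w(X^* )}\}<\infty$ (Cohen strongly $p$-summable sequences). An operator $v\in\mathcal L(X,Y)$ is almost $s$-summing if there is $C\ge0$ with $\left(\int_0^1\left\|\sum_{i=1}^m r_i(t)v(x_i)\right\|^2dt\right)^{1/2}\le C\|(x_i)_{i=1}^m\|_{w,s}$ for all $m\in\mathbb N$ and $x_1,\dots,x_m\in X$. *)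

theory Defs
  imports "HOL-Analysis.Analysis"
begin

text \<open>Rademacher functions: r_n(t) = sign(sin(2^n pi t)) on [0,1]; used for n >= 1.\<close>
definition rademacher :: "nat \<Rightarrow> real \<Rightarrow> real" where
  "rademacher n t = sgn (sin (2 ^ n * pi * t))"

definition lp_norm :: "ennreal \<Rightarrow> (nat \<Rightarrow> real) \<Rightarrow> ennreal" where
  "lp_norm s a =
     (if s = top then (SUP i. ennreal \<bar>a i\<bar>)
      else (let S = (\<Sum>i. ennreal (\<bar>a i\<bar> powr enn2real s))
            in if S = top then top else ennreal (enn2real S powr (1 / enn2real s))))"

definition weak_norm :: "ennreal \<Rightarrow> (nat \<Rightarrow> 'a::real_normed_vector) \<Rightarrow> ennreal" where
  "weak_norm s x = (SUP f \<in> {f :: 'a \<Rightarrow>\<^sub>L real. norm f \<le> 1}. lp_norm s (\<lambda>i. blinfun_apply f (x i)))"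

definition conj_exp :: "real \<Rightarrow> ennreal" where
  "conj_exp p = (if p = 1 then top else ennreal (p / (p - 1)))"

text \<open>Rad(X): the Rademacher series sum_{i>=1} r_i(t) x_i (sequence x indexed from 0,
  x i paired with r_(i+1)) converges for almost every t in [0,1] and
  int_0^1 ||sum r_i(t) x_i||^2 dt < infinity.\<close>
definition in_Rad :: "(nat \<Rightarrow> 'a::banach) \<Rightarrow> bool" where
  "in_Rad x \<longleftrightarrow>
     (AE t in lborel. t \<in> {0..1} \<longrightarrow> summable (\<lambda>i. rademacher (Suc i) t *\<^sub>R x i)) \<and>
     (\<integral>\<^sup>+ t. indicator {0..1::real} t *
        ennreal ((norm (\<Sum>i. rademacher (Suc i) t *\<^sub>R x i))\<^sup>2) \<partial>lborel) < top"

definition cohen_strongly :: "real \<Rightarrow> (nat \<Rightarrow> 'a::real_normed_vector) \<Rightarrow> bool" where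
  "cohen_strongly p y \<longleftrightarrow>
     (SUP ys \<in> {ys :: nat \<Rightarrow> ('a \<Rightarrow>\<^sub>L real). weak_norm (conj_exp p) ys \<le> 1}.
        (\<Sum>i. ennreal \<bar>blinfun_apply (ys i) (y i)\<bar>)) < top"

definition almost_summing :: "ennreal \<Rightarrow> ('a::real_normed_vector \<Rightarrow>\<^sub>L 'b::real_normed_vector) \<Rightarrow> bool" where
  "almost_summing s v \<longleftrightarrow>
     (\<exists>C\<ge>0. \<forall>(m::nat) (x::nat \<Rightarrow> 'a).
        ennreal (sqrt (LINT t:{0..1}|lborel.
            (norm (\<Sum>i<m. rademacher (Suc i) t *\<^sub>R blinfun_apply v (x i)))\<^sup>2))
        \<le> ennreal C * weak_norm s (\<lambda>i. if i < m then x i else 0))"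

definition op_adjoint :: "('a::real_normed_vector \<Rightarrow>\<^sub>L 'b::real_normed_vector) \<Rightarrow> (('b \<Rightarrow>\<^sub>L real) \<Rightarrow>\<^sub>L ('a \<Rightarrow>\<^sub>L real))" where
  "op_adjoint u = Blinfun (\<lambda>f. f o\<^sub>L u)"

end

theory Submission
  imports Defs
begin


lemma rad_meas[measurable]: "rademacher n \<in> borel_measurable borel"
  unfolding rademacher_def by measurable

lemma rad_abs: "\<bar>rademacher n t\<bar> \<le> 1"
  unfolding rademacher_def by (simp add: sgn_real_def)

lemma sin_plus_nat_2pi: "sin (x + real k * (2 * pi)) = sin x"
proof (induction k)
  case (Suc k)
  have "x + real (Suc k) * (2 * pi) = (x + real k * (2 * pi)) + 2 * pi"
    by (simp add: algebra_simps)
  then show ?case using Suc by (metis sin_periodic)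
qed simp

lemma rad_shift:
  assumes "m \<le> n"
  shows "rademacher n (t + 1 / 2 ^ m) = (if n = m then - rademacher n t else rademacher n t)"
proof -
  have e: "2 ^ n * pi * (t + 1 / 2 ^ m) = 2 ^ n * pi * t + 2 ^ (n - m) * pi"
  proof -
    have "(2::real) ^ n / 2 ^ m = 2 ^ (n - m)" using assms by (simp add: power_diff)
    then show ?thesis by (simp add: algebra_simps) (metis mult.commute times_divide_eq_right)
  qed
  show ?thesis
  proof (cases "n = m")
    case True
    then show ?thesis unfolding rademacher_def e by (simp add: sgn_minus)
  next
    case False
    then obtain k where k: "n - m = Suc k" using assms by (cases "n - m") auto
    have h: "2 ^ (n - m) * pi = real (2 ^ k) * (2 * pi)" by (simp add: k)
    have "sin (2 ^ n * pi * t + 2 ^ (n - m) * pi) = sin (2 ^ n * pi * t)"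
      unfolding h by (rule sin_plus_nat_2pi)
    then show ?thesis unfolding rademacher_def e using False by simp
  qed
qed

lemma rad_period: assumes "n \<ge> 1" shows "rademacher n (t + 1) = rademacher n t"
  using rad_shift[of 0 n t] assms by simp

lemma periodic_antisym_integral:
  fixes \<phi> :: "real \<Rightarrow> real"
  assumes per: "\<And>t. \<phi> (t + 1) = \<phi> t" and anti: "\<And>t. \<phi> (t + d) = - \<phi> t"
    and d: "0 \<le> d" "d \<le> 1"
    and int: "set_integrable lborel {0..1} \<phi>"
  shows "(LINT t:{0..1}|lborel. \<phi> t) = 0"
proof -
  have i01: "\<phi> integrable_on {0..1}" and eq: "(LINT t:{0..1}|lborel. \<phi> t) = integral {0..1} \<phi>"
    using set_borel_integral_eq_integral[OF int] by auto
  have "(\<lambda>x. \<phi> (x + 1)) integrable_on {1-1..2-1}" using i01 per by simp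
  then have i12: "\<phi> integrable_on {1..2}" using integrable_shift_real_ivl_iff by blast
  have i02: "\<phi> integrable_on {0..2}" by (rule Henstock_Kurzweil_Integration.integrable_combine[OF _ _ i01 i12]) auto
  have id1: "\<phi> integrable_on {d..1+d}" by (rule integrable_subinterval_real[OF i02]) (use d in auto)
  have "integral {0..1} (\<lambda>x. \<phi> (x + d)) = integral {d..1+d} \<phi>"
    using integral_shift_real_ivl[where f=\<phi> and a=d and b="1+d" and c=d] by simp
  also have "\<dots> = integral {d..1} \<phi> + integral {1..1+d} \<phi>"
    by (rule Henstock_Kurzweil_Integration.integral_combine[symmetric]) (use d id1 in auto)
  also have "integral {1..1+d} \<phi> = integral {0..d} \<phi>"
    using integral_shift_real_ivl[where f=\<phi> and a=1 and b="1+d" and c=1] per by simp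
  also have "integral {d..1} \<phi> + integral {0..d} \<phi> = integral {0..1} \<phi>"
    using Henstock_Kurzweil_Integration.integral_combine[of 0 d 1 \<phi>] d i01 by simp
  finally have "integral {0..1} (\<lambda>x. \<phi> (x + d)) = integral {0..1} \<phi>" .
  moreover have "integral {0..1} (\<lambda>x. \<phi> (x + d)) = - integral {0..1} \<phi>"
    by (simp add: anti)
  ultimately show ?thesis using eq by simp
qed

lemma bnd_sint:
  fixes f :: "real \<Rightarrow> real"
  assumes [measurable]: "f \<in> borel_measurable borel" and b: "\<And>t. \<bar>f t\<bar> \<le> B"
  shows "set_integrable lborel {0..1} f"
  unfolding set_integrable_def
  by (rule integrableI_bounded_set_indicator[where B=B]) (use b in auto)

lemma sint_sum:
  fixes f :: "nat \<Rightarrow> real \<Rightarrow> real"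
  assumes "\<And>i. i \<in> I \<Longrightarrow> set_integrable M A (f i)" "finite I"
  shows "set_integrable M A (\<lambda>x. \<Sum>i\<in>I. f i x) \<and> (LINT x:A|M. (\<Sum>i\<in>I. f i x)) = (\<Sum>i\<in>I. LINT x:A|M. f i x)"
  using assms(2,1)
proof (induction I rule: finite_induct)
  case empty
  then show ?case unfolding set_integrable_def set_lebesgue_integral_def by simp
next
  case (insert k I)
  then show ?case by (simp add: set_integral_add)
qed

lemma rad_sq_int: "(LINT t:{0..1}|lborel. rademacher n t * rademacher n t) = 1"
proof -
  have "countable (range (\<lambda>i::int. of_int i / 2 ^ n :: real))" by simp
  moreover have "{t. sin (2 ^ n * pi * t) = 0} \<subseteq> range (\<lambda>i::int. of_int i / 2 ^ n :: real)"
  proof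
    fix t assume "t \<in> {t. sin (2 ^ n * pi * t) = 0}"
    then obtain i :: int where "2 ^ n * pi * t = of_int i * pi" by (auto simp: sin_zero_iff_int2)
    then have "t = of_int i / 2 ^ n" by (simp add: field_simps)
    then show "t \<in> range (\<lambda>i::int. of_int i / 2 ^ n :: real)" by blast
  qed
  ultimately have "countable {t. sin (2 ^ n * pi * t) = 0}" by (rule countable_subset[rotated])
  then have "AE t in lborel. t \<notin> {t. sin (2 ^ n * pi * t) = 0}"
    by (intro AE_not_in countable_imp_null_set_lborel)
  then have ae1: "AE t \<in> {0..1} in lborel. rademacher n t * rademacher n t = 1"
    by eventually_elim (auto simp: rademacher_def sgn_real_def)
  have "(LINT t:{0..1}|lborel. rademacher n t * rademacher n t) = (LINT t:{0..1::real}|lborel. 1::real)"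
    by (intro set_lebesgue_integral_cong_AE[where f="\<lambda>t. rademacher n t * rademacher n t" and g="\<lambda>_. 1", OF _ _ _ ae1]) auto
  also have "\<dots> = 1" by (subst set_integral_const) auto
  finally show ?thesis .
qed

lemma rad_ortho:
  assumes "j < i"
  shows "(LINT t:{0..1}|lborel. rademacher (Suc i) t * rademacher (Suc j) t) = 0"
proof (rule periodic_antisym_integral[where d = "1 / 2 ^ Suc j"])
  show "set_integrable lborel {0..1} (\<lambda>t. rademacher (Suc i) t * rademacher (Suc j) t)"
    by (rule bnd_sint[where B=1]) (auto simp: abs_mult intro: mult_le_one rad_abs)
  show "rademacher (Suc i) (t + 1) * rademacher (Suc j) (t + 1) = rademacher (Suc i) t * rademacher (Suc j) t" for t
    by (simp add: rad_period)
  show "rademacher (Suc i) (t + 1 / 2 ^ Suc j) * rademacher (Suc j) (t + 1 / 2 ^ Suc j) = - (rademacher (Suc i) t * rademacher (Suc j) t)" for t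
    using rad_shift[of "Suc j" "Suc i" t] rad_shift[of "Suc j" "Suc j" t] assms by simp
  have "(1::real) \<le> 2 ^ j" by (rule one_le_power) simp
  then have "(1::real) \<le> 2 * 2 ^ j" by linarith
  then show "1 / 2 ^ Suc j \<le> (1::real)" by simp
qed auto

lemma rad_sint: "set_integrable lborel {0..1} (rademacher n)"
  by (rule bnd_sint[where B=1]) (auto intro: rad_abs)

lemma coef:
  fixes a :: "nat \<Rightarrow> real"
  assumes summ: "AE t in lborel. t \<in> {0..1} \<longrightarrow> summable (\<lambda>j. rademacher (Suc j) t * a j)"
    and int: "set_integrable lborel {0..1} (\<lambda>t. \<Sum>j. rademacher (Suc j) t * a j)"
  shows "(LINT t:{0..1}|lborel. rademacher (Suc i) t * (\<Sum>j. rademacher (Suc j) t * a j)) = a i"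
proof -
  define H where "H t = (\<Sum>j. rademacher (Suc j) t * a j)" for t
  define Q where "Q t = (\<Sum>j. rademacher (Suc (j + Suc i)) t * a (j + Suc i))" for t
  define P where "P t = (\<Sum>j<Suc i. rademacher (Suc j) t * a j)" for t
  have [measurable]: "H \<in> borel_measurable borel" "Q \<in> borel_measurable borel" "P \<in> borel_measurable borel"
    unfolding H_def Q_def P_def by measurable
  have aeHQ: "AE t \<in> {0..1} in lborel. H t = Q t + P t"
    using summ
  proof eventually_elim
    case (elim t)
    then show ?case unfolding H_def Q_def P_def
      using suminf_split_initial_segment[of "\<lambda>j. rademacher (Suc j) t * a j" "Suc i"] by simp
  qed
  have intR: "set_integrable lborel {0..1} (\<lambda>t. rademacher (Suc j) t * c)" for j c
    using rad_sint by (intro set_integrable_mult_left) auto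
  have intP: "set_integrable lborel {0..1} P"
    unfolding P_def using sint_sum[of "{..<Suc i}" lborel "{0..1}" "\<lambda>j t. rademacher (Suc j) t * a j"] intR by auto
  have intH: "set_integrable lborel {0..1} H" using int unfolding H_def .
  have "set_integrable lborel {0..1} (\<lambda>t. H t - P t)" using intH intP by (rule set_integral_diff)
  moreover have "AE t \<in> {0..1} in lborel. H t - P t = Q t" using aeHQ by eventually_elim auto
  ultimately have intQ: "set_integrable lborel {0..1} Q"
    by (subst set_integrable_cong_AE[where g="\<lambda>t. H t - P t"]) auto
  have intRQ: "set_integrable lborel {0..1} (\<lambda>t. rademacher (Suc i) t * Q t)"
  proof (rule set_integrable_bound[OF intQ])
    show "set_borel_measurable lborel {0..1} (\<lambda>t. rademacher (Suc i) t * Q t)"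
      unfolding set_borel_measurable_def by measurable
    show "AE t in lborel. t \<in> {0..1} \<longrightarrow> norm (rademacher (Suc i) t * Q t) \<le> norm (Q t)"
      using rad_abs[of "Suc i"] by (auto simp: abs_mult intro!: mult_left_le_one_le)
  qed
  have RQ0: "(LINT t:{0..1}|lborel. rademacher (Suc i) t * Q t) = 0"
  proof (rule periodic_antisym_integral[where d = "1 / 2 ^ Suc i", OF _ _ _ _ intRQ])
    show "rademacher (Suc i) (t + 1) * Q (t + 1) = rademacher (Suc i) t * Q t" for t
      by (simp add: rad_period Q_def)
    have "Q (t + 1 / 2 ^ Suc i) = Q t" for t
      unfolding Q_def using rad_shift[of "Suc i" "Suc (_ + Suc i)" t] by simp
    then show "rademacher (Suc i) (t + 1 / 2 ^ Suc i) * Q (t + 1 / 2 ^ Suc i) = - (rademacher (Suc i) t * Q t)" for t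
      using rad_shift[of "Suc i" "Suc i" t] by simp
    have "(1::real) \<le> 2 ^ i" by (rule one_le_power) simp
    then have "(1::real) \<le> 2 * 2 ^ i" by linarith
    then show "1 / 2 ^ Suc i \<le> (1::real)" by simp
  qed auto
  have intRR0: "set_integrable lborel {0..1} (\<lambda>t. rademacher (Suc i) t * rademacher (Suc j) t)" for j
    by (rule bnd_sint[where B=1]) (auto simp: abs_mult intro: mult_le_one rad_abs)
  have intRR: "set_integrable lborel {0..1} (\<lambda>t. a j * (rademacher (Suc i) t * rademacher (Suc j) t))" for j
    using intRR0[of j] by (rule set_integrable_mult_right)
  have SS: "set_integrable lborel {0..1} (\<lambda>t. \<Sum>j<Suc i. a j * (rademacher (Suc i) t * rademacher (Suc j) t)) \<and>
     (LINT t:{0..1}|lborel. (\<Sum>j<Suc i. a j * (rademacher (Suc i) t * rademacher (Suc j) t)))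
      = (\<Sum>j<Suc i. (LINT t:{0..1}|lborel. a j * (rademacher (Suc i) t * rademacher (Suc j) t)))"
    by (rule sint_sum) (use intRR in auto)
  have "(LINT t:{0..1}|lborel. rademacher (Suc i) t * H t)
      = (LINT t:{0..1}|lborel. rademacher (Suc i) t * Q t + (\<Sum>j<Suc i. a j * (rademacher (Suc i) t * rademacher (Suc j) t)))"
  proof (intro set_lebesgue_integral_cong_AE)
    show "AE t \<in> {0..1} in lborel. rademacher (Suc i) t * H t = rademacher (Suc i) t * Q t + (\<Sum>j<Suc i. a j * (rademacher (Suc i) t * rademacher (Suc j) t))"
      using aeHQ by eventually_elim (simp add: P_def distrib_left sum_distrib_left mult_ac)
  qed auto
  also have "\<dots> = (LINT t:{0..1}|lborel. rademacher (Suc i) t * Q t) + (LINT t:{0..1}|lborel. (\<Sum>j<Suc i. a j * (rademacher (Suc i) t * rademacher (Suc j) t)))"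
    using SS by (intro set_integral_add(2)[OF intRQ]) auto
  also have "(LINT t:{0..1}|lborel. (\<Sum>j<Suc i. a j * (rademacher (Suc i) t * rademacher (Suc j) t)))
      = (\<Sum>j<Suc i. a j * (LINT t:{0..1}|lborel. rademacher (Suc i) t * rademacher (Suc j) t))"
    using SS by auto
  also have "\<dots> = a i"
    by (simp add: rad_ortho rad_sq_int)
  finally show ?thesis using RQ0 unfolding H_def by simp
qed



lemma lp_norm_mono:
  assumes le: "\<And>i. \<bar>a i\<bar> \<le> \<bar>b i\<bar>"
  shows "lp_norm s a \<le> lp_norm s b"
proof (cases "s = top")
  case True
  then show ?thesis unfolding lp_norm_def
    by (auto intro!: SUP_mono ennreal_leI le)
next
  case False
  define q where "q = enn2real s"
  have q0: "q \<ge> 0" unfolding q_def by simp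
  define Sa where "Sa = (\<Sum>i. ennreal (\<bar>a i\<bar> powr q))"
  define Sb where "Sb = (\<Sum>i. ennreal (\<bar>b i\<bar> powr q))"
  have "Sa \<le> Sb" unfolding Sa_def Sb_def
    by (intro suminf_le ennreal_leI powr_mono2 q0 le) auto
  show ?thesis
  proof (cases "Sb = top")
    case True
    then show ?thesis using False unfolding lp_norm_def Let_def Sb_def[symmetric] Sa_def[symmetric] q_def[symmetric] by simp
  next
    case nt: False
    then have "Sa \<noteq> top" using \<open>Sa \<le> Sb\<close> by (auto simp: top_unique)
    moreover have "enn2real Sa powr (1 / q) \<le> enn2real Sb powr (1 / q)"
      using \<open>Sa \<le> Sb\<close> nt q0 by (intro powr_mono2 enn2real_mono) (auto simp: top.not_eq_extremum)
    ultimately show ?thesis using False nt unfolding lp_norm_def Let_def Sb_def[symmetric] Sa_def[symmetric] q_def[symmetric]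
      by (simp add: ennreal_leI)
  qed
qed

lemma weak_norm_mono:
  fixes x y :: "nat \<Rightarrow> 'a::real_normed_vector"
  assumes "\<And>i. \<exists>c. \<bar>c\<bar> \<le> 1 \<and> x i = c *\<^sub>R y i"
  shows "weak_norm s x \<le> weak_norm s y"
  unfolding weak_norm_def
proof (rule SUP_mono)
  fix f :: "'a \<Rightarrow>\<^sub>L real" assume f: "f \<in> {f. norm f \<le> 1}"
  have "lp_norm s (\<lambda>i. blinfun_apply f (x i)) \<le> lp_norm s (\<lambda>i. blinfun_apply f (y i))"
  proof (rule lp_norm_mono)
    fix i
    obtain c where c: "\<bar>c\<bar> \<le> 1" "x i = c *\<^sub>R y i" using assms by blast
    have "\<bar>blinfun_apply f (x i)\<bar> = \<bar>c\<bar> * \<bar>blinfun_apply f (y i)\<bar>"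
      by (simp add: c blinfun.scaleR_right abs_mult)
    also have "\<dots> \<le> \<bar>blinfun_apply f (y i)\<bar>" using c by (simp add: mult_left_le_one_le)
    finally show "\<bar>blinfun_apply f (x i)\<bar> \<le> \<bar>blinfun_apply f (y i)\<bar>" .
  qed
  then show "\<exists>m\<in>{f. norm f \<le> 1}. lp_norm s (\<lambda>i. blinfun_apply f (x i)) \<le> lp_norm s (\<lambda>i. blinfun_apply m (y i))"
    using f by blast
qed


lemma gs_le: "(g::real) * s \<le> g\<^sup>2 + s\<^sup>2"
proof -
  have "0 \<le> (g - s)\<^sup>2" by simp
  then have "2 * (g * s) \<le> g\<^sup>2 + s\<^sup>2" by (simp add: power2_diff)
  moreover have "0 \<le> g\<^sup>2" "0 \<le> s\<^sup>2" by simp_all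
  ultimately show ?thesis by linarith
qed

lemma key:
  fixes F G s :: "real \<Rightarrow> real"
  assumes [measurable]: "F \<in> borel_measurable borel" "G \<in> borel_measurable borel"
    and ae: "AE t in lborel. t \<in> {0..1} \<longrightarrow> \<bar>F t\<bar> \<le> G t * s t"
  shows "(\<integral>\<^sup>+t. indicator {0..1} t * ennreal \<bar>F t\<bar> \<partial>lborel)
     \<le> (\<integral>\<^sup>+t. indicator {0..1} t * ennreal ((G t)\<^sup>2) \<partial>lborel) + (\<integral>\<^sup>+t. indicator {0..1} t * ennreal ((s t)\<^sup>2) \<partial>lborel)"
proof -
  define \<phi> where "\<phi> t = max 0 (\<bar>F t\<bar> - (G t)\<^sup>2)" for t
  have [measurable]: "\<phi> \<in> borel_measurable borel" unfolding \<phi>_def by measurable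
  have "(\<integral>\<^sup>+t. indicator {0..1} t * ennreal \<bar>F t\<bar> \<partial>lborel)
      \<le> (\<integral>\<^sup>+t. indicator {0..1} t * ennreal ((G t)\<^sup>2) + indicator {0..1} t * ennreal (\<phi> t) \<partial>lborel)"
  proof (rule nn_integral_mono)
    fix t
    have "ennreal \<bar>F t\<bar> \<le> ennreal ((G t)\<^sup>2 + \<phi> t)" unfolding \<phi>_def by (intro ennreal_leI) auto
    also have "\<dots> = ennreal ((G t)\<^sup>2) + ennreal (\<phi> t)" unfolding \<phi>_def by (intro ennreal_plus) auto
    finally show "indicator {0..1} t * ennreal \<bar>F t\<bar> \<le> indicator {0..1} t * ennreal ((G t)\<^sup>2) + indicator {0..1} t * ennreal (\<phi> t)"
      by (auto split: split_indicator)
  qed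
  also have "\<dots> = (\<integral>\<^sup>+t. indicator {0..1} t * ennreal ((G t)\<^sup>2) \<partial>lborel) + (\<integral>\<^sup>+t. indicator {0..1} t * ennreal (\<phi> t) \<partial>lborel)"
    by (rule nn_integral_add) auto
  also have "(\<integral>\<^sup>+t. indicator {0..1} t * ennreal (\<phi> t) \<partial>lborel) \<le> (\<integral>\<^sup>+t. indicator {0..1} t * ennreal ((s t)\<^sup>2) \<partial>lborel)"
  proof (rule nn_integral_mono_AE)
    show "AE t in lborel. indicator {0..1} t * ennreal (\<phi> t) \<le> indicator {0..1} t * ennreal ((s t)\<^sup>2)"
      using ae
    proof eventually_elim
      case (elim t)
      show ?case
      proof (cases "t \<in> {0..1}")
        case True
        then have "\<bar>F t\<bar> \<le> G t * s t" using elim by auto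
        then have "\<phi> t \<le> (s t)\<^sup>2" unfolding \<phi>_def using gs_le[of "G t" "s t"] by auto
        then show ?thesis using True by (auto intro: ennreal_leI)
      qed auto
    qed
  qed
  finally show ?thesis by (simp add: add_left_mono)
qed

lemma l2_sint:
  fixes h s :: "real \<Rightarrow> real"
  assumes [measurable]: "h \<in> borel_measurable borel"
    and fin: "(\<integral>\<^sup>+t. indicator {0..1} t * ennreal ((s t)\<^sup>2) \<partial>lborel) < top"
    and ae: "AE t in lborel. t \<in> {0..1} \<longrightarrow> \<bar>h t\<bar> \<le> c * s t"
  shows "set_integrable lborel {0..1} h"
  unfolding set_integrable_def
proof (rule integrableI_bounded)
  show "(\<lambda>x. indicat_real {0..1} x *\<^sub>R h x) \<in> borel_measurable lborel" by measurable
  have "(\<integral>\<^sup>+ x. ennreal (norm (indicat_real {0..1} x *\<^sub>R h x)) \<partial>lborel) = (\<integral>\<^sup>+t. indicator {0..1} t * ennreal \<bar>h t\<bar> \<partial>lborel)"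
    by (intro nn_integral_cong) (auto split: split_indicator)
  also have "\<dots> \<le> (\<integral>\<^sup>+t. indicator {0..1::real} t * ennreal ((c)\<^sup>2) \<partial>lborel) + (\<integral>\<^sup>+t. indicator {0..1} t * ennreal ((s t)\<^sup>2) \<partial>lborel)"
    by (rule key[of h "\<lambda>_. c" s, OF _ _ ae]) auto
  also have "(\<integral>\<^sup>+t. indicator {0..1::real} t * ennreal ((c)\<^sup>2) \<partial>lborel) = ennreal (c\<^sup>2)"
    by (subst mult.commute) (simp add: nn_integral_cmult_indicator)
  also have "ennreal (c\<^sup>2) + (\<integral>\<^sup>+t. indicator {0..1} t * ennreal ((s t)\<^sup>2) \<partial>lborel) < top"
    using fin by simp
  finally show "(\<integral>\<^sup>+ x. ennreal (norm (indicat_real {0..1} x *\<^sub>R h x)) \<partial>lborel) < \<infinity>" by simp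
qed



lemma adj_apply: "blinfun_apply (op_adjoint u) f = f o\<^sub>L u"
  unfolding op_adjoint_def
  by (subst bounded_linear_Blinfun_apply)
     (auto intro: bounded_bilinear.bounded_linear_left[OF bounded_bilinear_blinfun_compose])

lemma G_meas:
  fixes g :: "nat \<Rightarrow> 'c::real_normed_vector"
  shows "(\<lambda>t. norm (\<Sum>i<n. rademacher (Suc i) t *\<^sub>R g i)) \<in> borel_measurable borel"
proof -
  have V: "(\<lambda>t. \<lambda>i. rademacher (Suc i) t) \<in> borel_measurable (borel :: real measure)"
    by (rule measurable_coordinatewise_then_product) simp
  have c: "continuous_on UNIV (\<lambda>v :: nat \<Rightarrow> real. norm (\<Sum>i<n. v i *\<^sub>R g i))"
    by (intro continuous_intros continuous_on_product_coordinates)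
  show ?thesis using borel_measurable_continuous_on[OF c V] by simp
qed

theorem theorem2p1:
  fixes u :: "'a::banach \<Rightarrow>\<^sub>L 'b::banach" and p :: real
  assumes "p \<ge> 1"
    and "almost_summing (conj_exp p) (op_adjoint u)"
  shows "\<forall>x :: nat \<Rightarrow> 'a. in_Rad x \<longrightarrow> cohen_strongly p (\<lambda>i. blinfun_apply u (x i))"
proof (intro allI impI)
  fix x :: "nat \<Rightarrow> 'a" assume xR: "in_Rad x"
  define S where "S t = (\<Sum>i. rademacher (Suc i) t *\<^sub>R x i)" for t
  define N where "N = (\<integral>\<^sup>+ t. indicator {0..1::real} t * ennreal ((norm (S t))\<^sup>2) \<partial>lborel)"
  have summS: "AE t in lborel. t \<in> {0..1} \<longrightarrow> summable (\<lambda>i. rademacher (Suc i) t *\<^sub>R x i)"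
    and Nfin: "N < top" using xR unfolding in_Rad_def N_def S_def by auto
  obtain C where C0: "C \<ge> 0" and C: "\<And>m (y :: nat \<Rightarrow> ('b \<Rightarrow>\<^sub>L real)). ennreal (sqrt (LINT t:{0..1}|lborel.
            (norm (\<Sum>i<m. rademacher (Suc i) t *\<^sub>R blinfun_apply (op_adjoint u) (y i)))\<^sup>2))
        \<le> ennreal C * weak_norm (conj_exp p) (\<lambda>i. if i < m then y i else 0)"
    using assms(2) unfolding almost_summing_def by blast
  define B where "B = ennreal (C\<^sup>2) + N"
  have "(SUP ys \<in> {ys :: nat \<Rightarrow> ('b \<Rightarrow>\<^sub>L real). weak_norm (conj_exp p) ys \<le> 1}.
        (\<Sum>i. ennreal \<bar>blinfun_apply (ys i) (u (x i))\<bar>)) \<le> B"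
  proof (rule SUP_least)
    fix ys :: "nat \<Rightarrow> ('b \<Rightarrow>\<^sub>L real)"
    assume "ys \<in> {ys. weak_norm (conj_exp p) ys \<le> 1}"
    then have W: "weak_norm (conj_exp p) ys \<le> 1" by simp
    show "(\<Sum>i. ennreal \<bar>blinfun_apply (ys i) (u (x i))\<bar>) \<le> B"
      unfolding suminf_eq_SUP
    proof (rule SUP_least)
      fix n
      define e where "e i = sgn (ys i (u (x i)))" for i
      define y where "y i = e i *\<^sub>R ys i" for i
      define g where "g i = blinfun_apply (op_adjoint u) (y i)" for i
      have gx: "g i z = e i * ys i (u z)" for i z
        unfolding g_def adj_apply y_def by (simp add: blinfun.scaleR_left)
      have gxi: "g i (x i) = \<bar>ys i (u (x i))\<bar>" for i
        unfolding gx e_def by (auto simp: sgn_real_def)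
      define H where "H i t = (\<Sum>j. rademacher (Suc j) t * g i (x j))" for i t
      have Hmeas[measurable]: "H i \<in> borel_measurable borel" for i
        unfolding H_def by measurable
      have aeH: "AE t in lborel. t \<in> {0..1} \<longrightarrow> summable (\<lambda>j. rademacher (Suc j) t * g i (x j)) \<and> H i t = g i (S t)" for i
        using summS
      proof eventually_elim
        case (elim t)
        show ?case
        proof
          assume t: "t \<in> {0..1}"
          then have sm: "summable (\<lambda>j. rademacher (Suc j) t *\<^sub>R x j)" using elim by auto
          have bl: "bounded_linear (blinfun_apply (g i))" by (rule blinfun.bounded_linear_right)
          show "summable (\<lambda>j. rademacher (Suc j) t * g i (x j)) \<and> H i t = g i (S t)"
            using bounded_linear.summable[OF bl sm] bounded_linear.suminf[OF bl sm]
            by (simp add: H_def S_def blinfun.scaleR_right)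
        qed
      qed
      have intH: "set_integrable lborel {0..1} (H i)" for i
      proof (rule l2_sint[where s="\<lambda>t. norm (S t)" and c="norm (g i)"])
        show "(\<integral>\<^sup>+t. indicator {0..1} t * ennreal ((norm (S t))\<^sup>2) \<partial>lborel) < top"
          using Nfin unfolding N_def .
        show "AE t in lborel. t \<in> {0..1} \<longrightarrow> \<bar>H i t\<bar> \<le> norm (g i) * norm (S t)"
          using aeH[of i] by eventually_elim (use norm_blinfun[of "g i"] in auto)
      qed auto
      have coefs: "(LINT t:{0..1}|lborel. rademacher (Suc i) t * H i t) = \<bar>ys i (u (x i))\<bar>" for i
      proof -
        have "(LINT t:{0..1}|lborel. rademacher (Suc i) t * H i t) = g i (x i)"
          unfolding H_def
        proof (rule coef)
          show "AE t in lborel. t \<in> {0..1} \<longrightarrow> summable (\<lambda>j. rademacher (Suc j) t * g i (x j))"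
            using aeH[of i] by eventually_elim auto
          show "set_integrable lborel {0..1} (\<lambda>t. \<Sum>j. rademacher (Suc j) t * g i (x j))"
            using intH[of i] unfolding H_def .
        qed
        then show ?thesis using gxi by simp
      qed
      have intRH: "set_integrable lborel {0..1} (\<lambda>t. rademacher (Suc i) t * H i t)" for i
      proof (rule set_integrable_bound[OF intH[of i]])
        show "set_borel_measurable lborel {0..1} (\<lambda>t. rademacher (Suc i) t * H i t)"
          unfolding set_borel_measurable_def by measurable
        show "AE t in lborel. t \<in> {0..1} \<longrightarrow> norm (rademacher (Suc i) t * H i t) \<le> norm (H i t)"
          using rad_abs[of "Suc i"] by (auto simp: abs_mult intro!: mult_left_le_one_le)
      qed
      define F where "F t = (\<Sum>i<n. rademacher (Suc i) t * H i t)" for t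
      have Fmeas[measurable]: "F \<in> borel_measurable borel" unfolding F_def by measurable
      have SF: "set_integrable lborel {0..1} F \<and> (LINT t:{0..1}|lborel. F t) = (\<Sum>i<n. LINT t:{0..1}|lborel. rademacher (Suc i) t * H i t)"
        unfolding F_def by (rule sint_sum) (use intRH in auto)
      have sumeq: "(\<Sum>i<n. ennreal \<bar>ys i (u (x i))\<bar>) = ennreal (LINT t:{0..1}|lborel. F t)"
        using SF coefs by simp 
      define Gv where "Gv t = (\<Sum>i<n. rademacher (Suc i) t *\<^sub>R g i)" for t
      define G where "G t = norm (Gv t)" for t
      have Gmeas[measurable]: "G \<in> borel_measurable borel" unfolding G_def Gv_def by (rule G_meas)
      have "ennreal (LINT t:{0..1}|lborel. F t) \<le> (\<integral>\<^sup>+t. indicator {0..1} t * ennreal \<bar>F t\<bar> \<partial>lborel)"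
      proof -
        have "ennreal (LINT t:{0..1}|lborel. F t) \<le> ennreal (norm (LINT t:{0..1}|lborel. F t))"
          by (intro ennreal_leI) simp
        also have "\<dots> \<le> (\<integral>\<^sup>+t. norm (indicator {0..1} t *\<^sub>R F t) \<partial>lborel)"
          unfolding set_lebesgue_integral_def
          by (rule integral_norm_bound_ennreal) (use SF in \<open>simp add: set_integrable_def\<close>)
        also have "\<dots> = (\<integral>\<^sup>+t. indicator {0..1} t * ennreal \<bar>F t\<bar> \<partial>lborel)"
          by (intro nn_integral_cong) (auto split: split_indicator)
        finally show ?thesis .
      qed
      also have "\<dots> \<le> (\<integral>\<^sup>+t. indicator {0..1} t * ennreal ((G t)\<^sup>2) \<partial>lborel) + N"
        unfolding N_def
      proof (rule key)
        show "AE t in lborel. t \<in> {0..1} \<longrightarrow> \<bar>F t\<bar> \<le> G t * norm (S t)"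
        proof -
          have aeall: "AE t in lborel. \<forall>i. t \<in> {0..1} \<longrightarrow> summable (\<lambda>j. rademacher (Suc j) t * g i (x j)) \<and> H i t = g i (S t)"
            by (subst AE_all_countable) (use aeH in blast)
          then show ?thesis
        proof eventually_elim
          case (elim t)
          show ?case
          proof
            assume t: "t \<in> {0..1}"
            have "F t = blinfun_apply (Gv t) (S t)"
              unfolding F_def Gv_def using elim t
              by (simp add: blinfun.sum_left blinfun.scaleR_left)
            then show "\<bar>F t\<bar> \<le> G t * norm (S t)" unfolding G_def using norm_blinfun[of "Gv t" "S t"] by simp
          qed
        qed
        qed
      qed auto
      also have "(\<integral>\<^sup>+t. indicator {0..1} t * ennreal ((G t)\<^sup>2) \<partial>lborel) \<le> ennreal (C\<^sup>2)"
      proof -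
        have Gb: "\<bar>(G t)\<^sup>2\<bar> \<le> (\<Sum>i<n. norm (g i))\<^sup>2" for t
        proof -
          have "G t \<le> (\<Sum>i<n. norm (rademacher (Suc i) t *\<^sub>R g i))" unfolding G_def Gv_def by (rule norm_sum)
          also have "\<dots> \<le> (\<Sum>i<n. norm (g i))"
            using rad_abs by (intro sum_mono) (auto intro!: mult_left_le_one_le)
          finally show ?thesis unfolding G_def by (simp add: power_mono)
        qed
        have intG: "set_integrable lborel {0..1} (\<lambda>t. (G t)\<^sup>2)"
          by (rule bnd_sint[OF _ Gb]) measurable
        have "(\<integral>\<^sup>+t. indicator {0..1} t * ennreal ((G t)\<^sup>2) \<partial>lborel) = (\<integral>\<^sup>+t. ennreal (indicator {0..1} t *\<^sub>R (G t)\<^sup>2) \<partial>lborel)"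
          by (intro nn_integral_cong) (auto split: split_indicator)
        also have "\<dots> = ennreal (LINT t:{0..1}|lborel. (G t)\<^sup>2)"
          unfolding set_lebesgue_integral_def
          by (rule nn_integral_eq_integral) (use intG in \<open>auto simp: set_integrable_def\<close>)
        also have "\<dots> \<le> ennreal (C\<^sup>2)"
        proof -
          have "weak_norm (conj_exp p) (\<lambda>i. if i < n then y i else 0) \<le> weak_norm (conj_exp p) ys"
          proof (rule weak_norm_mono)
            fix i
            show "\<exists>c. \<bar>c\<bar> \<le> 1 \<and> (if i < n then y i else 0) = c *\<^sub>R ys i"
              by (rule exI[where x="if i < n then e i else 0"]) (auto simp: y_def e_def sgn_real_def)
          qed
          then have "ennreal (sqrt (LINT t:{0..1}|lborel. (G t)\<^sup>2)) \<le> ennreal C"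
            using C[where m=n and y=y] W unfolding G_def Gv_def g_def
            by (metis (no_types, lifting) dual_order.trans mult.right_neutral mult_left_mono zero_le)
          then have "sqrt (LINT t:{0..1}|lborel. (G t)\<^sup>2) \<le> C" using C0 by simp
          then have "(LINT t:{0..1}|lborel. (G t)\<^sup>2) \<le> C\<^sup>2"
            using C0 by (metis real_sqrt_le_iff real_sqrt_pow2_iff real_sqrt_ge_zero power2_eq_square sqrt_le_D)
          then show ?thesis by (rule ennreal_leI)
        qed
        finally show ?thesis .
      qed
      finally show "(\<Sum>i<n. ennreal \<bar>blinfun_apply (ys i) (u (x i))\<bar>) \<le> B"
        unfolding B_def sumeq by (simp add: add_right_mono)
    qed
  qed
  also have "B < top" unfolding B_def using Nfin by simp
  finally show "cohen_strongly p (\<lambda>i. blinfun_apply u (x i))" unfolding cohen_strongly_def .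
qed

end
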